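(* Let $p,b\in\mathbb{R}^K$ with $p_1\ge p_2\ge\dots\ge p_K\ge0$, $\sum_{i=1}^Kp_i=1$, and $b_i\ge0$ for all $i$. Then $$\sum_{i=1}^Kp_ib_i^2-\Big[\sum_{i=1}^Kp_ib_i\Big]^2\ge p_1\sum_{j=2}^Kp_j\,[b_1-b_j]^2.$$ *)

theory Defs
  imports Complex_Main
begin

end

theory Submission
  imports Defs
begin

theorem lemma9:
  fixes p b :: "nat \<Rightarrow> real" and K :: nat
  assumes mono: "\<And>i j. 1 \<le> i \<Longrightarrow> i \<le> j \<Longrightarrow> j \<le> K \<Longrightarrow> p j \<le> p i"
    and nonneg: "\<And>i. 1 \<le> i \<Longrightarrow> i \<le> K \<Longrightarrow> p i \<ge> 0"
    and sum1: "(\<Sum>i=1..K. p i) = 1"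
    and bnonneg: "\<And>i. 1 \<le> i \<Longrightarrow> i \<le> K \<Longrightarrow> b i \<ge> 0"
  shows "(\<Sum>i=1..K. p i * (b i)^2) - (\<Sum>i=1..K. p i * b i)^2
           \<ge> p 1 * (\<Sum>j=2..K. p j * (b 1 - b j)^2)"
proof -
  let ?S = "{1..K}"
  define f where "f i j = p i * p j * (b i - b j)^2" for i j
  have K1: "K \<ge> 1" using sum1 by (cases K) auto
  have fnn: "f i j \<ge> 0" if "i \<in> ?S" "j \<in> ?S" for i j
    using nonneg that unfolding f_def by auto
  have D: "(\<Sum>i\<in>?S. \<Sum>j\<in>?S. f i j)
      = 2 * (\<Sum>i\<in>?S. p i) * (\<Sum>i\<in>?S. p i * (b i)^2) - 2 * (\<Sum>i\<in>?S. p i * b i)^2"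
  proof -
    have "(\<Sum>i\<in>?S. \<Sum>j\<in>?S. f i j) = (\<Sum>i\<in>?S. \<Sum>j\<in>?S.
        p j * (p i * (b i)^2) + p i * (p j * (b j)^2) - 2 * ((p i * b i) * (p j * b j)))"
      unfolding f_def by (intro sum.cong refl) (simp add: algebra_simps power2_eq_square)
    also have "\<dots> = (\<Sum>i\<in>?S. \<Sum>j\<in>?S. p j * (p i * (b i)^2)) + (\<Sum>i\<in>?S. \<Sum>j\<in>?S. p i * (p j * (b j)^2))
        - 2 * (\<Sum>i\<in>?S. \<Sum>j\<in>?S. (p i * b i) * (p j * b j))"
      by (simp add: sum_subtractf sum.distrib sum_distrib_left)
    also have "(\<Sum>i\<in>?S. \<Sum>j\<in>?S. p j * (p i * (b i)^2)) = (\<Sum>i\<in>?S. p i) * (\<Sum>i\<in>?S. p i * (b i)^2)"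
      by (simp add: sum_distrib_left sum_distrib_right)
    also have "(\<Sum>i\<in>?S. \<Sum>j\<in>?S. p i * (p j * (b j)^2)) = (\<Sum>i\<in>?S. p i) * (\<Sum>i\<in>?S. p i * (b i)^2)"
      by (subst sum.swap) (simp add: sum_distrib_left sum_distrib_right mult.commute mult.left_commute)
    also have "(\<Sum>i\<in>?S. \<Sum>j\<in>?S. (p i * b i) * (p j * b j)) = (\<Sum>i\<in>?S. p i * b i)^2"
      by (simp add: sum_product power2_eq_square)
    also have "(\<Sum>i\<in>?S. p i) * (\<Sum>i\<in>?S. p i * (b i)^2) + (\<Sum>i\<in>?S. p i) * (\<Sum>i\<in>?S. p i * (b i)^2) - 2 * (\<Sum>i\<in>?S. p i * b i)^2
       = 2 * (\<Sum>i\<in>?S. p i) * (\<Sum>i\<in>?S. p i * (b i)^2) - 2 * (\<Sum>i\<in>?S. p i * b i)^2"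
      by simp
    finally show ?thesis .
  qed
  have split: "?S = insert 1 {2..K}" using K1 by auto
  have "(\<Sum>i\<in>?S. \<Sum>j\<in>?S. f i j) \<ge> (\<Sum>j\<in>?S. f 1 j) + (\<Sum>i\<in>{2..K}. f i 1)"
  proof -
    have "(\<Sum>i\<in>?S. \<Sum>j\<in>?S. f i j) = (\<Sum>j\<in>?S. f 1 j) + (\<Sum>i\<in>{2..K}. \<Sum>j\<in>?S. f i j)"
      by (subst split) simp
    moreover have "(\<Sum>i\<in>{2..K}. f i 1) \<le> (\<Sum>i\<in>{2..K}. \<Sum>j\<in>?S. f i j)"
    proof (rule sum_mono)
      fix i assume i: "i \<in> {2..K}"
      show "f i 1 \<le> (\<Sum>j\<in>?S. f i j)"
        using i K1 by (intro member_le_sum fnn) auto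
    qed
    ultimately show ?thesis by linarith
  qed
  moreover have "(\<Sum>j\<in>?S. f 1 j) = p 1 * (\<Sum>j=2..K. p j * (b 1 - b j)^2)"
    by (subst split) (simp add: f_def sum_distrib_left algebra_simps)
  moreover have "(\<Sum>i\<in>{2..K}. f i 1) = p 1 * (\<Sum>j=2..K. p j * (b 1 - b j)^2)"
    by (simp add: f_def sum_distrib_left algebra_simps power2_commute)
  ultimately show ?thesis using D sum1 by simp
qed

end
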